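(* Let $\|\cdot\|$ be an arbitrary norm on $\mathbb{R}^d$ and let $A$ be an expanding real $d\times d$ matrix such that $\|\gamma\|\le\|A\gamma\|$ for all $\gamma\in\mathbb{R}^d$. Let $r:[0,\infty)\to\mathbb{R}$ be a continuous decreasing function with $r(0)=1$ and $r(s)\to0$ as $s\to\infty$. Put $\varphi(\gamma):=r(\|\gamma\|)$ and $g(\gamma):=\varphi(\gamma)-\varphi(A\gamma)$ for $\gamma\in\mathbb{R}^d$. Then: (i) $g(\gamma)\ge 0$ for all $\gamma\in\mathbb{R}^d$; (ii) $\sum_{j\in\mathbb{Z}} g(A^j\gamma)=1$ for all $\gamma\in\mathbb{R}^d\setminus\{0\}$; (iii) there exists a constant $C>0$ such that $$C\le\sum_{j\in\mathbb{Z}}|g(A^j\gamma)|^2\le 1\quad\text{for all }\gamma\in\mathbb{R}^d\setminus\{0\}.$$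
   Context: A real $d\times d$ matrix is called expanding if all of its eigenvalues have absolute value strictly greater than one. *)

theory Defs
  imports "HOL-Analysis.Analysis"
begin

text \<open>An arbitrary norm on R^d (d = CARD('n)), given as a function satisfying the norm axioms.\<close>
definition is_norm :: "(real ^ 'n \<Rightarrow> real) \<Rightarrow> bool" where
  "is_norm N \<longleftrightarrow>
     (\<forall>x. 0 \<le> N x) \<and> (\<forall>x. N x = 0 \<longleftrightarrow> x = 0) \<and>
     (\<forall>c x. N (c *\<^sub>R x) = \<bar>c\<bar> * N x) \<and>
     (\<forall>x y. N (x + y) \<le> N x + N y)"

text \<open>Complex eigenvalues of a real square matrix: roots of the characteristic polynomial.\<close>
definition complex_eigenvalue :: "real ^ 'n ^ 'n \<Rightarrow> complex \<Rightarrow> bool" where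
  "complex_eigenvalue A z \<longleftrightarrow>
     det ((\<chi> i j. complex_of_real (A $ i $ j)) - mat z) = 0"

text \<open>A real matrix is expanding if all its (complex) eigenvalues have modulus > 1.\<close>
definition expanding :: "real ^ 'n ^ 'n \<Rightarrow> bool" where
  "expanding A \<longleftrightarrow> (\<forall>z. complex_eigenvalue A z \<longrightarrow> cmod z > 1)"

text \<open>Integer powers A^j applied to a vector (negative powers via the inverse matrix).\<close>
definition matpow_int_v :: "real ^ 'n ^ 'n \<Rightarrow> int \<Rightarrow> real ^ 'n \<Rightarrow> real ^ 'n" where
  "matpow_int_v A j x =
     (if 0 \<le> j then (((*v) A) ^^ nat j) x
      else (((*v) (matrix_inv A)) ^^ nat (- j)) x)"

end

theory Submission
  imports Defs "Jordan_Normal_Form.Spectral_Radius"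
begin

definition mR :: "('n \<Rightarrow> nat) \<Rightarrow> real^'n^'n \<Rightarrow> complex mat" where
  "mR to M = Matrix.mat CARD('n) CARD('n)
     (\<lambda>(i,j). complex_of_real (vec_nth (vec_nth M (inv_into UNIV to i)) (inv_into UNIV to j)))"

definition vR :: "('n \<Rightarrow> nat) \<Rightarrow> real^'n \<Rightarrow> complex Matrix.vec" where
  "vR to y = Matrix.vec CARD('n) (\<lambda>i. complex_of_real (vec_nth y (inv_into UNIV to i)))"

definition hv :: "('n \<Rightarrow> nat) \<Rightarrow> complex Matrix.vec \<Rightarrow> complex^'n" where
  "hv to v = (\<chi> x. vec_index v (to x))"

definition cM :: "real^'n^'n \<Rightarrow> complex^'n^'n" where
  "cM M = (\<chi> i j. complex_of_real (vec_nth (vec_nth M i) j))"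

lemma bij_facts:
  assumes "bij_betw (to::'n::finite \<Rightarrow> nat) UNIV {0..<CARD('n)}"
  shows "\<And>x. inv_into UNIV to (to x) = x" "\<And>i. i < CARD('n) \<Longrightarrow> to (inv_into UNIV to i) = i"
    "\<And>x. to x < CARD('n)" "bij_betw (inv_into UNIV to) {0..<CARD('n)} UNIV"
  subgoal using bij_betw_inv_into_left[OF assms UNIV_I] .
  subgoal for i using bij_betw_inv_into_right[OF assms, of i] by simp
  subgoal for x using bij_betwE[OF assms] by simp
  subgoal using assms by (rule bij_betw_inv_into)
  done

lemma MV1:
  assumes bij: "bij_betw (to::'n::finite \<Rightarrow> nat) UNIV {0..<CARD('n)}"
  shows "mR to M *\<^sub>v vR to y = vR to (M *v y)"
proof (rule eq_vecI)
  show "dim_vec (mR to M *\<^sub>v vR to y) = dim_vec (vR to (M *v y))"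
    by (simp add: mR_def vR_def)
  fix i assume "i < dim_vec (vR to (M *v y))"
  hence i: "i < CARD('n)" by (simp add: vR_def)
  let ?f = "inv_into UNIV to"
  have "vec_index (mR to M *\<^sub>v vR to y) i =
     (\<Sum>j = 0..<CARD('n). complex_of_real (vec_nth (vec_nth M (?f i)) (?f j) * vec_nth y (?f j)))"
    using i by (simp add: mR_def vR_def scalar_prod_def Matrix.row_def)
  also have "\<dots> = (\<Sum>x\<in>UNIV. complex_of_real (vec_nth (vec_nth M (?f i)) x * vec_nth y x))"
    using sum.reindex_bij_betw[OF bij_facts(4)[OF bij], of "\<lambda>x. complex_of_real (vec_nth (vec_nth M (?f i)) x * vec_nth y x)"]
    by simp
  also have "\<dots> = vec_index (vR to (M *v y)) i"
    using i by (simp add: vR_def matrix_vector_mult_def of_real_sum)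
  finally show "vec_index (mR to M *\<^sub>v vR to y) i = vec_index (vR to (M *v y)) i" .
qed

lemma MV2:
  assumes bij: "bij_betw (to::'n::finite \<Rightarrow> nat) UNIV {0..<CARD('n)}"
    and v: "v \<in> carrier_vec CARD('n)"
  shows "hv to (mR to M *\<^sub>v v) = cM M *v hv to v"
proof -
  let ?f = "inv_into UNIV to"
  have "vec_index (mR to M *\<^sub>v v) (to x) = vec_nth (cM M *v hv to v) x" for x
  proof -
    have "vec_index (mR to M *\<^sub>v v) (to x) =
       (\<Sum>j = 0..<CARD('n). complex_of_real (vec_nth (vec_nth M x) (?f j)) * vec_index v j)"
      using v bij_facts[OF bij] by (simp add: mR_def scalar_prod_def Matrix.row_def)
    also have "\<dots> = (\<Sum>y\<in>UNIV. complex_of_real (vec_nth (vec_nth M x) (?f (to y))) * vec_index v (to y))"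
      using sum.reindex_bij_betw[OF bij, of "\<lambda>j. complex_of_real (vec_nth (vec_nth M x) (?f j)) * vec_index v j"]
      by simp
    also have "\<dots> = vec_nth (cM M *v hv to v) x"
      using bij_facts[OF bij] by (simp add: cM_def hv_def matrix_vector_mult_def)
    finally show ?thesis .
  qed
  thus ?thesis by (simp add: vec_eq_iff hv_def)
qed

lemma smult_mat_vec_assoc:
  assumes "M \<in> carrier_mat n n" "v \<in> carrier_vec n"
  shows "(c \<cdot>\<^sub>m M) *\<^sub>v v = c \<cdot>\<^sub>v (M *\<^sub>v v)"
  using assms by (intro eq_vecI) (auto simp: row_smult scalar_prod_def sum_distrib_left ac_simps)

lemma iter_scale:
  fixes B :: "real^'n^'n"
  shows "(((*v) (t *\<^sub>R B)) ^^ k) y = t ^ k *\<^sub>R ((((*v) B) ^^ k) y)"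
proof (induction k)
  case 0 then show ?case by simp
next
  case (Suc k)
  then show ?case
    by (simp add: scaleR_matrix_vector_assoc[symmetric] matrix_vector_mult_scaleR)
qed

lemma vR_norm: "norm (vec_index (vR to y) j) = \<bar>vec_nth y (inv_into UNIV to j)\<bar>" if "j < CARD('n)"
  for to :: "'n::finite \<Rightarrow> nat" 
  using that by (simp add: vR_def)

lemma entry_decay:
  fixes B :: "real^'n^'n"
  assumes eig: "\<And>w e. w \<noteq> 0 \<Longrightarrow> cM B *v w = e *s w \<Longrightarrow> cmod e < 1"
  shows "\<exists>c \<rho>. 0 \<le> c \<and> 0 < \<rho> \<and> \<rho> < 1 \<and>
     (\<forall>k y x. \<bar>vec_nth ((((*v) B) ^^ k) y) x\<bar> \<le> c * \<rho>^k * (\<Sum>j\<in>UNIV. \<bar>vec_nth y j\<bar>))"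
proof -
  obtain to :: "'n \<Rightarrow> nat" where bij: "bij_betw to UNIV {0..<CARD('n)}"
    using ex_bij_betw_finite_nat[of "UNIV :: 'n set"] by auto
  note bf = bij_facts[OF bij]
  let ?n = "CARD('n)"
  have n0: "0 < ?n" by simp
  define BJ where "BJ = mR to B"
  have BJc: "BJ \<in> carrier_mat ?n ?n" by (simp add: BJ_def mR_def)
  have spec: "cmod e < 1" if "e \<in> spectrum BJ" for e
  proof -
    from that obtain v where ev: "eigenvector BJ v e"
      unfolding spectrum_def eigenvalue_def by auto
    hence v: "v \<in> carrier_vec ?n" and v0: "v \<noteq> 0\<^sub>v ?n" and Bv: "BJ *\<^sub>v v = e \<cdot>\<^sub>v v"
      using BJc unfolding eigenvector_def by auto
    from v v0 obtain i where i: "i < ?n" and vi: "vec_index v i \<noteq> 0"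
      by (metis carrier_vecD eq_vecI index_zero_vec(1) index_zero_vec(2))
    have w0: "hv to v \<noteq> 0"
    proof
      assume "hv to v = 0"
      hence "vec_nth (hv to v) (inv_into UNIV to i) = 0" by simp
      thus False using vi bf(2)[OF i] by (simp add: hv_def)
    qed
    have "cM B *v hv to v = hv to (BJ *\<^sub>v v)"
      using MV2[OF bij v] by (simp add: BJ_def)
    also have "\<dots> = e *s hv to v"
      unfolding Bv hv_def by (rule Finite_Cartesian_Product.vec_eq_iff[THEN iffD2]) (use v bf in simp)
    finally show ?thesis using eig[OF w0] by simp
  qed
  define sr where "sr = spectral_radius BJ"
  have sr_mem: "sr \<in> norm ` spectrum BJ"
    using spectral_radius_mem_max(1)[OF BJc n0] by (simp add: sr_def)
  have sr1: "sr < 1" and sr0: "0 \<le> sr" using sr_mem spec by auto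
  define \<rho> where "\<rho> = (1 + sr) / 2"
  have \<rho>0: "0 < \<rho>" and \<rho>1: "\<rho> < 1" and sr\<rho>: "sr < \<rho>" using sr1 sr0 by (auto simp: \<rho>_def)
  define B' where "B' = (1 / \<rho>) *\<^sub>R B"
  define BJ' where "BJ' = mR to B'"
  have BJ'c: "BJ' \<in> carrier_mat ?n ?n" by (simp add: BJ'_def mR_def)
  have BJ'eq: "BJ' = complex_of_real (1/\<rho>) \<cdot>\<^sub>m BJ"
    by (intro eq_matI) (auto simp: BJ'_def BJ_def B'_def mR_def)
  have spec': "cmod e < 1" if "e \<in> spectrum BJ'" for e
  proof -
    from that obtain v where ev: "eigenvector BJ' v e"
      unfolding spectrum_def eigenvalue_def by auto
    hence v: "v \<in> carrier_vec ?n" and v0: "v \<noteq> 0\<^sub>v ?n" and Bv: "BJ' *\<^sub>v v = e \<cdot>\<^sub>v v"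
      using BJ'c unfolding eigenvector_def by auto
    have "complex_of_real (1/\<rho>) \<cdot>\<^sub>v (BJ *\<^sub>v v) = e \<cdot>\<^sub>v v"
      using Bv smult_mat_vec_assoc[OF BJc v] by (simp add: BJ'eq)
    hence "complex_of_real \<rho> \<cdot>\<^sub>v (complex_of_real (1/\<rho>) \<cdot>\<^sub>v (BJ *\<^sub>v v)) = complex_of_real \<rho> \<cdot>\<^sub>v (e \<cdot>\<^sub>v v)"
      by simp
    hence "BJ *\<^sub>v v = (complex_of_real \<rho> * e) \<cdot>\<^sub>v v"
      using \<rho>0 by (simp add: smult_smult_assoc of_real_mult[symmetric] del: of_real_mult)
    hence "eigenvector BJ v (complex_of_real \<rho> * e)"
      using v v0 BJc by (simp add: eigenvector_def)
    hence "complex_of_real \<rho> * e \<in> spectrum BJ" by (auto simp: spectrum_def eigenvalue_def)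
    hence "norm (complex_of_real \<rho> * e) \<le> sr"
      using spectral_radius_mem_max(2)[OF BJc n0] by (auto simp: sr_def)
    hence "\<rho> * cmod e \<le> sr" using \<rho>0 by (simp add: norm_mult)
    hence "\<rho> * cmod e < \<rho> * 1" using sr\<rho> by simp
    thus ?thesis using \<rho>0 by (simp only: mult_less_cancel_left_pos)
  qed
  have "spectral_radius BJ' \<in> norm ` spectrum BJ'"
    using spectral_radius_mem_max(1)[OF BJ'c n0] by simp
  hence "spectral_radius BJ' < 1" using spec' by auto
  from spectral_radius_jnf_norm_bound_less_1_upper_triangular[OF BJ'c this]
  obtain c0 where c0: "\<And>k. norm_bound (BJ' ^\<^sub>m k) c0" by auto
  have c00: "0 \<le> c0"
  proof -
    have "\<forall>i j. i < dim_row (BJ' ^\<^sub>m 0) \<longrightarrow> j < dim_col (BJ' ^\<^sub>m 0) \<longrightarrow> cmod ((BJ' ^\<^sub>m 0) $$ (i, j)) \<le> c0"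
      using c0[of 0] unfolding norm_bound_def .
    hence "0 < dim_row (BJ' ^\<^sub>m 0) \<longrightarrow> 0 < dim_col (BJ' ^\<^sub>m 0) \<longrightarrow> cmod ((BJ' ^\<^sub>m 0) $$ (0, 0)) \<le> c0"
      by blast
    moreover have "0 < dim_row (BJ' ^\<^sub>m 0)" "0 < dim_col (BJ' ^\<^sub>m 0)" using BJ'c n0 by auto
    ultimately have "cmod ((BJ' ^\<^sub>m 0) $$ (0, 0)) \<le> c0" by blast
    thus ?thesis using norm_ge_zero order_trans by blast
  qed
  have pw: "vR to ((((*v) B') ^^ k) y) = (BJ' ^\<^sub>m k) *\<^sub>v vR to y" for k y
  proof (induction k arbitrary: y)
    case 0
    then show ?case using BJ'c by (simp add: vR_def)
  next
    case (Suc k)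
    have "vR to ((((*v) B') ^^ Suc k) y) = vR to ((((*v) B') ^^ k) (B' *v y))"
      by (simp only: funpow_Suc_right comp_def)
    also have "\<dots> = (BJ' ^\<^sub>m k) *\<^sub>v (BJ' *\<^sub>v vR to y)"
      using Suc MV1[OF bij] by (simp add: BJ'_def)
    also have "\<dots> = (BJ' ^\<^sub>m Suc k) *\<^sub>v vR to y"
      using BJ'c by (simp add: assoc_mult_mat_vec[of _ ?n ?n _ ?n] vR_def)
    finally show ?case .
  qed
  have bnd': "\<bar>vec_nth ((((*v) B') ^^ k) y) x\<bar> \<le> c0 * (\<Sum>j\<in>UNIV. \<bar>vec_nth y j\<bar>)" for k y x
  proof -
    let ?M = "BJ' ^\<^sub>m k"
    have Mc: "?M \<in> carrier_mat ?n ?n" using BJ'c by simp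
    have "\<bar>vec_nth ((((*v) B') ^^ k) y) x\<bar> = norm (vec_index (vR to ((((*v) B') ^^ k) y)) (to x))"
      using bf by (simp add: vR_def)
    also have "\<dots> = norm (\<Sum>j = 0..<?n. ?M $$ (to x, j) * vec_index (vR to y) j)"
      using bf carrier_matD[OF Mc] unfolding pw by (simp add: scalar_prod_def Matrix.row_def vR_def)
    also have "\<dots> \<le> (\<Sum>j = 0..<?n. norm (?M $$ (to x, j) * vec_index (vR to y) j))"
      by (rule norm_sum)
    also have "\<dots> \<le> (\<Sum>j = 0..<?n. c0 * \<bar>vec_nth y (inv_into UNIV to j)\<bar>)"
    proof (rule sum_mono)
      fix j assume j: "j \<in> {0..<?n}"
      have "norm (?M $$ (to x, j)) \<le> c0" using c0[of k] carrier_matD[OF Mc] bf j unfolding norm_bound_def by (simp del: pow_mat_dim_square)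
      thus "norm (?M $$ (to x, j) * vec_index (vR to y) j) \<le> c0 * \<bar>vec_nth y (inv_into UNIV to j)\<bar>"
        using j by (simp add: norm_mult vR_norm mult_right_mono)
    qed
    also have "\<dots> = c0 * (\<Sum>j\<in>UNIV. \<bar>vec_nth y j\<bar>)"
      using sum.reindex_bij_betw[OF bf(4), of "\<lambda>j. \<bar>vec_nth y j\<bar>"] by (simp add: sum_distrib_left[symmetric])
    finally show ?thesis .
  qed
  have BB': "B = \<rho> *\<^sub>R B'" using \<rho>0 by (simp add: B'_def)
  show ?thesis
  proof (intro exI conjI allI)
    show "0 \<le> c0" "0 < \<rho>" "\<rho> < 1" by fact+
    fix k y x
    have "\<bar>vec_nth ((((*v) B) ^^ k) y) x\<bar> = \<rho>^k * \<bar>vec_nth ((((*v) B') ^^ k) y) x\<bar>"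
      unfolding BB' iter_scale using \<rho>0 by (simp add: abs_mult)
    also have "\<dots> \<le> \<rho>^k * (c0 * (\<Sum>j\<in>UNIV. \<bar>vec_nth y j\<bar>))"
      using bnd' \<rho>0 by (simp add: mult_left_mono)
    finally show "\<bar>vec_nth ((((*v) B) ^^ k) y) x\<bar> \<le> c0 * \<rho>^k * (\<Sum>j\<in>UNIV. \<bar>vec_nth y j\<bar>)"
      by (simp add: mult_ac)
  qed
qed

lemma cM_vec: "cM M *v (\<chi> i. complex_of_real (vec_nth x i)) = (\<chi> i. complex_of_real (vec_nth (M *v x) i))"
  by (simp add: Finite_Cartesian_Product.vec_eq_iff cM_def matrix_vector_mult_def of_real_sum)

lemma cM_mult: "cM (M ** P) = cM M ** cM P"
  by (simp add: Finite_Cartesian_Product.vec_eq_iff cM_def matrix_matrix_mult_def of_real_sum)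

lemma cM_one: "cM (Finite_Cartesian_Product.mat 1) = Finite_Cartesian_Product.mat 1"
  by (simp add: Finite_Cartesian_Product.vec_eq_iff cM_def Finite_Cartesian_Product.mat_def)

lemma mat_vec_c: "(Finite_Cartesian_Product.mat z :: 'a::comm_ring_1^'n^'n) *v w = z *s w"
proof -
  have "(\<Sum>j\<in>UNIV. vec_nth (vec_nth (Finite_Cartesian_Product.mat z :: 'a^'n^'n) i) j * vec_nth w j)
      = (\<Sum>j\<in>UNIV. if i = j then z * vec_nth w j else 0)" for i
    by (rule sum.cong) (auto simp: Finite_Cartesian_Product.mat_def)
  thus ?thesis by (simp add: Finite_Cartesian_Product.vec_eq_iff matrix_vector_mult_def)
qed

lemma mat_vec_smult: "(M :: 'a::comm_ring_1^'n^'n) *v (c *s w) = c *s (M *v w)"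
  by (simp add: Finite_Cartesian_Product.vec_eq_iff matrix_vector_mult_def sum_distrib_left ac_simps)

lemma L_eig:
  assumes "w \<noteq> 0" "cM A *v w = z *s w"
  shows "complex_eigenvalue A z"
proof -
  let ?M = "cM A - Finite_Cartesian_Product.mat z"
  have "?M *v w = 0"
    using assms(2) by (simp add: matrix_vector_mult_diff_rdistrib mat_vec_c)
  hence "\<not> invertible ?M"
    using assms(1) unfolding invertible_left_inverse matrix_left_invertible_ker by blast
  hence "Determinants.det ?M = 0" using invertible_det_nz by blast
  thus ?thesis unfolding complex_eigenvalue_def cM_def by simp
qed

lemma expanding_invertible:
  assumes "expanding A"
  shows "invertible A"
proof (rule ccontr)
  assume "\<not> invertible A"
  then obtain x where x: "A *v x = 0" "x \<noteq> 0"
    unfolding invertible_left_inverse matrix_left_invertible_ker by blast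
  let ?w = "(\<chi> i. complex_of_real (vec_nth x i))"
  have "?w \<noteq> 0" using x(2) by (simp add: Finite_Cartesian_Product.vec_eq_iff)
  moreover have "cM A *v ?w = 0 *s ?w" unfolding cM_vec x(1) by (simp add: Finite_Cartesian_Product.vec_eq_iff)
  ultimately have "complex_eigenvalue A 0" by (rule L_eig)
  thus False using assms unfolding expanding_def by fastforce
qed

lemma inv_facts:
  assumes "invertible A"
  shows "A ** matrix_inv A = Finite_Cartesian_Product.mat 1" "matrix_inv A ** A = Finite_Cartesian_Product.mat 1"
proof -
  from assms obtain A' where "A ** A' = Finite_Cartesian_Product.mat 1 \<and> A' ** A = Finite_Cartesian_Product.mat 1"
    unfolding invertible_def by blast
  hence "A ** matrix_inv A = Finite_Cartesian_Product.mat 1 \<and> matrix_inv A ** A = Finite_Cartesian_Product.mat 1"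
    unfolding matrix_inv_def by (rule someI)
  thus "A ** matrix_inv A = Finite_Cartesian_Product.mat 1" "matrix_inv A ** A = Finite_Cartesian_Product.mat 1" by auto
qed

lemma inv_eig:
  assumes exp: "expanding A" and w: "w \<noteq> 0" and ew: "cM (matrix_inv A) *v w = e *s w"
  shows "cmod e < 1"
proof -
  note I = inv_facts[OF expanding_invertible[OF exp]]
  have "w = cM (A ** matrix_inv A) *v w" by (simp add: I cM_one)
  also have "\<dots> = e *s (cM A *v w)"
    by (simp add: cM_mult matrix_vector_mul_assoc[symmetric] ew mat_vec_smult)
  finally have wE: "w = e *s (cM A *v w)" .
  have e0: "e \<noteq> 0" using wE w by auto
  have "cM A *v w = (1/e) *s w"
  proof -
    have "(1/e) *s w = (1/e) *s (e *s (cM A *v w))" using wE by (rule arg_cong)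
    thus ?thesis using e0 by (simp add: vector_smult_assoc)
  qed
  from L_eig[OF w this] have "cmod (1/e) > 1" using exp unfolding expanding_def by blast
  hence "1 / cmod e > 1" by (simp add: norm_divide)
  moreover have "0 < cmod e" using e0 by simp
  ultimately show ?thesis by (simp add: less_divide_eq)
qed

lemma normN:
  assumes "is_norm N"
  shows "N 0 = 0" "\<And>x. 0 \<le> N x" "\<And>c x. N (c *\<^sub>R x) = \<bar>c\<bar> * N x"
    "\<And>x y. N (x + y) \<le> N x + N y" "\<And>x. N (- x) = N x" "\<And>x. x \<noteq> 0 \<Longrightarrow> 0 < N x"
    "\<And>x y. \<bar>N x - N y\<bar> \<le> N (x - y)"
proof -
  note d = assms[unfolded is_norm_def]
  show "N 0 = 0" using d by auto
  show nn: "\<And>x. 0 \<le> N x" using d by auto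
  show sc: "\<And>c x. N (c *\<^sub>R x) = \<bar>c\<bar> * N x" using d by auto
  show tr: "\<And>x y. N (x + y) \<le> N x + N y" using d by auto
  show mi: "\<And>x. N (- x) = N x" using sc[of "-1"] by simp
  show "\<And>x. x \<noteq> 0 \<Longrightarrow> 0 < N x" using d by (metis order_le_less)
  show "\<And>x y. \<bar>N x - N y\<bar> \<le> N (x - y)"
  proof -
    fix x y :: "real^'a"
    have "N x \<le> N (x - y) + N y" using tr[of "x - y" y] by simp
    moreover have "N y \<le> N (y - x) + N x" using tr[of "y - x" x] by simp
    moreover have "N (y - x) = N (x - y)" using mi[of "x - y"] by simp
    ultimately show "\<bar>N x - N y\<bar> \<le> N (x - y)" by linarith
  qed
qed

lemma N_sum:
  assumes "is_norm N" "finite S"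
  shows "N (\<Sum>i\<in>S. f i) \<le> (\<Sum>i\<in>S. N (f i))"
  using assms(2)
proof (induction S rule: finite_induct)
  case empty then show ?case using normN(1)[OF assms(1)] by simp
next
  case (insert x F)
  then show ?case using normN(4)[OF assms(1), of "f x" "sum f F"] by simp
qed

lemma N_up:
  assumes "is_norm N"
  shows "N x \<le> (\<Sum>i\<in>UNIV. N (axis i 1)) * (\<Sum>j\<in>UNIV. \<bar>vec_nth x j\<bar>)"
proof -
  let ?K = "\<Sum>i\<in>UNIV. N (axis i (1::real))"
  have "N x = N (\<Sum>j\<in>UNIV. vec_nth x j *\<^sub>R axis j 1)"
    using basis_expansion[of x] by (simp add: scalar_mult_eq_scaleR)
  also have "\<dots> \<le> (\<Sum>j\<in>UNIV. N (vec_nth x j *\<^sub>R axis j 1))" by (rule N_sum[OF assms]) simp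
  also have "\<dots> = (\<Sum>j\<in>UNIV. \<bar>vec_nth x j\<bar> * N (axis j 1))" using normN(3)[OF assms] by simp
  also have "\<dots> \<le> (\<Sum>j\<in>UNIV. \<bar>vec_nth x j\<bar> * ?K)"
  proof (rule sum_mono)
    fix j :: 'a
    have "N (axis j 1) \<le> ?K"
      by (rule member_le_sum) (use normN(2)[OF assms] in auto)
    thus "\<bar>vec_nth x j\<bar> * N (axis j 1) \<le> \<bar>vec_nth x j\<bar> * ?K" by (simp add: mult_left_mono)
  qed
  finally show ?thesis by (simp add: sum_distrib_right mult.commute)
qed

lemma l1_le: "(\<Sum>j\<in>UNIV. \<bar>vec_nth (x::real^'n) j\<bar>) \<le> real CARD('n) * norm x"
proof -
  have "(\<Sum>j\<in>UNIV. \<bar>vec_nth x j\<bar>) \<le> (\<Sum>j\<in>(UNIV::'n set). norm x)"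
    by (rule sum_mono) (rule component_le_norm_cart)
  thus ?thesis by simp
qed

lemma N_low:
  assumes "is_norm N"
  shows "\<exists>m>0. \<forall>x::real^'n. m * norm x \<le> N x"
proof -
  let ?K = "(\<Sum>i\<in>UNIV. N (axis i (1::real) :: real^'n)) * real CARD('n)"
  have K0: "0 \<le> ?K" using normN(2)[OF assms] by (simp add: sum_nonneg)
  have "?K-lipschitz_on (sphere 0 1) N"
  proof (rule lipschitz_onI)
    fix x y :: "real^'n"
    have "dist (N x) (N y) \<le> N (x - y)" using normN(7)[OF assms] by (simp add: dist_real_def)
    also have "\<dots> \<le> (\<Sum>i\<in>UNIV. N (axis i 1)) * (\<Sum>j\<in>UNIV. \<bar>vec_nth (x - y) j\<bar>)" by (rule N_up[OF assms])
    also have "\<dots> \<le> (\<Sum>i\<in>UNIV. N (axis i 1)) * (real CARD('n) * norm (x - y))"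
      by (rule mult_left_mono[OF l1_le]) (use normN(2)[OF assms] in \<open>simp add: sum_nonneg\<close>)
    finally show "dist (N x) (N y) \<le> ?K * dist x y" by (simp add: dist_norm mult_ac)
  qed (rule K0)
  hence cont: "continuous_on (sphere 0 1) N" by (rule lipschitz_on_continuous_on)
  obtain i :: 'n where True by simp
  have ne: "sphere (0::real^'n) 1 \<noteq> {}"
    using norm_axis_1[of i] by (metis mem_sphere_0 empty_iff)
  obtain x0 where x0: "x0 \<in> sphere 0 1" and mn: "\<forall>y\<in>sphere 0 1. N x0 \<le> N y"
    using continuous_attains_inf[OF compact_sphere ne cont] by blast
  have x00: "x0 \<noteq> 0" using x0 by auto
  have m0: "0 < N x0" by (rule normN(6)[OF assms x00])
  show ?thesis
  proof (intro exI conjI allI)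
    show "0 < N x0" by fact
    fix x :: "real^'n"
    show "N x0 * norm x \<le> N x"
    proof (cases "x = 0")
      case True then show ?thesis using normN(1)[OF assms] by simp
    next
      case False
      have "(1 / norm x) *\<^sub>R x \<in> sphere 0 1" using False by simp
      hence "N x0 \<le> N ((1 / norm x) *\<^sub>R x)" using mn by blast
      also have "\<dots> = N x / norm x" using normN(3)[OF assms] by simp
      finally show ?thesis using False by (simp add: le_divide_eq mult.commute)
    qed
  qed
qed

theorem proposition2p4:
  fixes N :: "real ^ 'n \<Rightarrow> real"
    and A :: "real ^ 'n ^ 'n"
    and r :: "real \<Rightarrow> real"
    and \<phi> g :: "real ^ 'n \<Rightarrow> real"
  assumes hN: "is_norm N"
    and hA: "expanding A"
    and hAN: "\<And>\<gamma>. N \<gamma> \<le> N (A *v \<gamma>)"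
    and hrc: "continuous_on {0..} r"
    and hrd: "\<And>s t. 0 \<le> s \<Longrightarrow> s \<le> t \<Longrightarrow> r t \<le> r s"
    and hr0: "r 0 = 1"
    and hrlim: "(r \<longlongrightarrow> 0) at_top"
    and h\<phi>: "\<And>\<gamma>. \<phi> \<gamma> = r (N \<gamma>)"
    and hg: "\<And>\<gamma>. g \<gamma> = \<phi> \<gamma> - \<phi> (A *v \<gamma>)"
  shows "(\<forall>\<gamma>. g \<gamma> \<ge> 0)
    \<and> (\<forall>\<gamma>. \<gamma> \<noteq> 0 \<longrightarrow> ((\<lambda>j. g (matpow_int_v A j \<gamma>)) has_sum 1) (UNIV :: int set))
    \<and> (\<exists>C > 0. \<forall>\<gamma>. \<gamma> \<noteq> 0 \<longrightarrow>
          C \<le> (\<Sum>\<^sub>\<infinity>j\<in>(UNIV :: int set). \<bar>g (matpow_int_v A j \<gamma>)\<bar>\<^sup>2)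
          \<and> (\<Sum>\<^sub>\<infinity>j\<in>(UNIV :: int set). \<bar>g (matpow_int_v A j \<gamma>)\<bar>\<^sup>2) \<le> 1)"
proof -
  note nN = normN[OF hN]
  define B where "B = matrix_inv A"
  note AB = inv_facts[OF expanding_invertible[OF hA], folded B_def]
  have ABv: "\<And>v. A *v (B *v v) = v" "\<And>v. B *v (A *v v) = v"
    by (simp_all add: matrix_vector_mul_assoc AB)
  obtain c \<rho> where c0: "0 \<le> c" and \<rho>0: "0 < \<rho>" and \<rho>1: "\<rho> < 1"
    and ent: "\<And>k y x. \<bar>vec_nth ((((*v) B) ^^ k) y) x\<bar> \<le> c * \<rho>^k * (\<Sum>j\<in>UNIV. \<bar>vec_nth y j\<bar>)"
    using entry_decay[of B] inv_eig[OF hA] unfolding B_def by blast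
  obtain m where m0: "0 < m" and mlow: "\<And>x. m * norm x \<le> N x"
    using N_low[OF hN] by blast
  define K where "K = (\<Sum>i\<in>UNIV. N (axis i (1::real) :: real^'n))"
  have K0: "0 \<le> K" unfolding K_def using nN(2) by (simp add: sum_nonneg)
  define C where "C = K * real CARD('n) * c * real CARD('n) / m"
  have C0: "0 \<le> C" unfolding C_def using K0 c0 m0 by simp
  have dec: "N ((((*v) B) ^^ k) y) \<le> C * \<rho>^k * N y" for k y
  proof -
    let ?z = "(((*v) B) ^^ k) y"
    let ?S = "\<Sum>j\<in>UNIV. \<bar>vec_nth y j\<bar>"
    have S0: "0 \<le> ?S" by (simp add: sum_nonneg)
    have "(\<Sum>x\<in>UNIV. \<bar>vec_nth ?z x\<bar>) \<le> (\<Sum>x\<in>(UNIV::'n set). c * \<rho>^k * ?S)"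
      by (rule sum_mono) (rule ent)
    hence zS: "(\<Sum>x\<in>UNIV. \<bar>vec_nth ?z x\<bar>) \<le> real CARD('n) * (c * \<rho>^k * ?S)" by simp
    have ny: "norm y \<le> N y / m" using mlow[of y] m0 by (simp add: le_divide_eq mult.commute)
    have "?S \<le> real CARD('n) * norm y" by (rule l1_le)
    also have "\<dots> \<le> real CARD('n) * (N y / m)" using mult_left_mono[OF ny, of "real CARD('n)"] by simp
    finally have Sy: "?S \<le> real CARD('n) * (N y / m)" .
    have "N ?z \<le> K * (\<Sum>x\<in>UNIV. \<bar>vec_nth ?z x\<bar>)" unfolding K_def by (rule N_up[OF hN])
    also have "\<dots> \<le> K * (real CARD('n) * (c * \<rho>^k * ?S))" by (rule mult_left_mono[OF zS K0])
    also have "\<dots> \<le> K * (real CARD('n) * (c * \<rho>^k * (real CARD('n) * (N y / m))))"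
      using Sy K0 c0 \<rho>0 by (intro mult_left_mono) auto
    also have "\<dots> = C * \<rho>^k * N y" by (simp add: C_def)
    finally show ?thesis .
  qed
  have BA_iter: "(((*v) B) ^^ k) ((((*v) A) ^^ k) y) = y" for k y
  proof (induction k arbitrary: y)
    case 0 then show ?case by simp
  next
    case (Suc k)
    have "(((*v) B) ^^ Suc k) ((((*v) A) ^^ Suc k) y) = (((*v) B) ^^ k) (B *v (A *v ((((*v) A) ^^ k) y)))"
      by (simp only: funpow_Suc_right[where f="(*v) B"] funpow.simps(2)[where f="(*v) A"] comp_def)
    also have "\<dots> = y" using Suc by (simp add: ABv)
    finally show ?case .
  qed
  have AB1: "N y \<le> C * \<rho>^k * N ((((*v) A) ^^ k) y)" for k y
    using dec[of k "(((*v) A) ^^ k) y"] BA_iter by simp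
  define P where "P \<gamma> j = matpow_int_v A j \<gamma>" for \<gamma> j
  have Pnat: "P \<gamma> (int k) = (((*v) A) ^^ k) \<gamma>" for \<gamma> k by (simp add: P_def matpow_int_v_def)
  have Pneg: "P \<gamma> (- int k) = (((*v) B) ^^ k) \<gamma>" for \<gamma> k
    by (cases "k = 0") (simp_all add: P_def matpow_int_v_def B_def)
  have Pstep: "A *v P \<gamma> j = P \<gamma> (j + 1)" for \<gamma> j
  proof (cases "0 \<le> j")
    case True
    hence "nat (j + 1) = Suc (nat j)" by simp
    thus ?thesis using True by (simp add: P_def matpow_int_v_def)
  next
    case False
    hence e1: "nat (- j) = Suc (nat (- (j + 1)))" by simp
    have "P \<gamma> (j + 1) = (((*v) B) ^^ nat (- (j + 1))) \<gamma>"
    proof (cases "j + 1 = 0")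
      case True then show ?thesis by (simp add: P_def matpow_int_v_def)
    next
      case False
      with \<open>\<not> 0 \<le> j\<close> show ?thesis by (simp add: P_def matpow_int_v_def B_def)
    qed
    moreover have "P \<gamma> j = B *v ((((*v) B) ^^ nat (- (j + 1))) \<gamma>)"
      using False e1 by (simp add: P_def matpow_int_v_def B_def)
    ultimately show ?thesis by (simp add: ABv)
  qed
  have Pshift: "P \<gamma> (j + int n) = (((*v) A) ^^ n) (P \<gamma> j)" for \<gamma> j n
  proof (induction n)
    case 0 then show ?case by simp
  next
    case (Suc n)
    have "P \<gamma> (j + int (Suc n)) = P \<gamma> ((j + int n) + 1)" by (simp add: algebra_simps)
    also have "\<dots> = A *v P \<gamma> (j + int n)" by (simp add: Pstep)
    finally show ?case using Suc by simp
  qed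
  have gP: "g (P \<gamma> j) = r (N (P \<gamma> j)) - r (N (P \<gamma> (j + 1)))" for \<gamma> j
    by (simp add: hg h\<phi> Pstep)
  have rnn: "0 \<le> r t" if t: "0 \<le> t" for t
  proof (rule ccontr)
    assume "\<not> 0 \<le> r t"
    hence "r t < 0" by simp
    hence "eventually (\<lambda>u. r t < r u) at_top" using order_tendstoD(1)[OF hrlim] by blast
    then obtain N0 where N0: "\<And>u. u \<ge> N0 \<Longrightarrow> r t < r u" unfolding eventually_at_top_linorder by blast
    have "r (max N0 t) \<le> r t" using hrd[OF t] by simp
    moreover have "r t < r (max N0 t)" using N0 by simp
    ultimately show False by simp
  qed
  have gnn: "0 \<le> g \<gamma>" for \<gamma>
    using hrd[OF nN(2) hAN] by (simp add: hg h\<phi>)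
  have gle1: "g \<gamma> \<le> 1" for \<gamma>
  proof -
    have "r (N \<gamma>) \<le> 1" using hrd[of 0 "N \<gamma>"] nN(2) hr0 by simp
    moreover have "0 \<le> r (N (A *v \<gamma>))" using rnn nN(2) by simp
    ultimately show ?thesis by (simp add: hg h\<phi>)
  qed
  have limB: "(\<lambda>k. N ((((*v) B) ^^ k) \<gamma>)) \<longlonglongrightarrow> 0" for \<gamma>
  proof (rule tendsto_sandwich[of "\<lambda>_. 0" _ _ "\<lambda>k. C * \<rho>^k * N \<gamma>"])
    show "\<forall>\<^sub>F k in sequentially. 0 \<le> N ((((*v) B) ^^ k) \<gamma>)" using nN(2) by simp
    show "\<forall>\<^sub>F k in sequentially. N ((((*v) B) ^^ k) \<gamma>) \<le> C * \<rho>^k * N \<gamma>" using dec by simp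
    show "((\<lambda>_. 0) \<longlongrightarrow> (0::real)) sequentially" by simp
    have "(\<lambda>k. \<rho>^k) \<longlonglongrightarrow> 0" proof (rule LIMSEQ_power_zero)
      show "norm \<rho> < 1" using \<rho>0 \<rho>1 by (simp add: real_norm_def abs_of_pos)
    qed
    note pz = this
    have "(\<lambda>k. C * \<rho>^k * N \<gamma>) \<longlonglongrightarrow> C * 0 * N \<gamma>"
      using tendsto_mult_right[OF tendsto_mult_left[OF pz, of C], of "N \<gamma>"] by simp
    thus "(\<lambda>k. C * \<rho>^k * N \<gamma>) \<longlonglongrightarrow> 0" by simp
  qed
  have limA: "filterlim (\<lambda>k. N ((((*v) A) ^^ k) \<gamma>)) at_top sequentially" if \<gamma>0: "\<gamma> \<noteq> 0" for \<gamma>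
    unfolding filterlim_at_top
  proof
    fix Z :: real
    have Ng: "0 < N \<gamma>" by (rule nN(6)[OF \<gamma>0])
    have pos: "0 < N \<gamma> / ((C + 1) * (\<bar>Z\<bar> + 1))" using Ng C0 by simp
    obtain k0 where k0: "\<rho>^k0 < N \<gamma> / ((C + 1) * (\<bar>Z\<bar> + 1))" using real_arch_pow_inv[OF pos \<rho>1] by blast
    show "\<forall>\<^sub>F k in sequentially. Z \<le> N ((((*v) A) ^^ k) \<gamma>)"
    proof (rule eventually_sequentiallyI[of k0])
      fix k assume kk: "k0 \<le> k"
      let ?X = "N ((((*v) A) ^^ k) \<gamma>)"
      have X0: "0 \<le> ?X" by (rule nN(2))
      have pk: "\<rho>^k \<le> \<rho>^k0" using kk \<rho>0 \<rho>1 by (intro power_decreasing) auto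
      have "N \<gamma> \<le> C * \<rho>^k * ?X" by (rule AB1)
      also have "\<dots> \<le> (C + 1) * \<rho>^k0 * ?X"
        using pk C0 \<rho>0 X0 by (intro mult_right_mono mult_mono) auto
      finally have a1: "N \<gamma> \<le> (C + 1) * \<rho>^k0 * ?X" .
      have D: "0 < (C + 1) * (\<bar>Z\<bar> + 1)" using C0 by simp
      have "\<rho>^k0 * ((C + 1) * (\<bar>Z\<bar> + 1)) < N \<gamma>" using k0 pos_less_divide_eq[OF D] by blast
      hence "((C + 1) * \<rho>^k0) * (\<bar>Z\<bar> + 1) < N \<gamma>" by (simp only: mult_ac)
      hence "(C + 1) * \<rho>^k0 < N \<gamma> / (\<bar>Z\<bar> + 1)"
        using pos_less_divide_eq[of "\<bar>Z\<bar> + 1" "(C + 1) * \<rho>^k0" "N \<gamma>"] by simp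
      show "Z \<le> ?X"
      proof (rule ccontr)
        assume "\<not> Z \<le> ?X"
        hence "?X < \<bar>Z\<bar> + 1" by simp
        hence "(C + 1) * \<rho>^k0 * ?X \<le> (C + 1) * \<rho>^k0 * (\<bar>Z\<bar> + 1)"
          using C0 \<rho>0 by (intro mult_left_mono) auto
        also have "\<dots> < N \<gamma>" using \<open>(C + 1) * \<rho>^k0 < N \<gamma> / (\<bar>Z\<bar> + 1)\<close>
          by (simp add: less_divide_eq)
        finally show False using a1 by simp
      qed
    qed
  qed
  have part2: "((\<lambda>j. g (P \<gamma> j)) has_sum 1) UNIV" if \<gamma>0: "\<gamma> \<noteq> 0" for \<gamma>
  proof -
    let ?f = "\<lambda>j. g (P \<gamma> j)"
    define a where "a k = r (N ((((*v) A) ^^ k) \<gamma>))" for k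
    define b where "b k = r (N ((((*v) B) ^^ k) \<gamma>))" for k
    have alim: "a \<longlonglongrightarrow> 0" unfolding a_def using filterlim_compose[OF hrlim limA[OF \<gamma>0]] .
    have "(\<lambda>k. r (N ((((*v) B) ^^ k) \<gamma>))) \<longlonglongrightarrow> r 0"
      by (rule continuous_on_tendsto_compose[OF hrc limB]) (use nN(2) in auto)
    hence blim: "b \<longlonglongrightarrow> 1" unfolding b_def hr0 .
    have f1: "?f (int k) = a k - a (Suc k)" for k
    proof -
      have e: "P \<gamma> (int k + 1) = (((*v) A) ^^ (Suc k)) \<gamma>"
        using Pnat[of \<gamma> "Suc k"] by (simp add: add.commute)
      have "?f (int k) = r (N (P \<gamma> (int k))) - r (N (P \<gamma> (int k + 1)))" by (rule gP)
      also have "\<dots> = a k - a (Suc k)" by (simp only: e Pnat a_def)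
      finally show ?thesis .
    qed
    have f2: "?f (- int k - 1) = b (Suc k) - b k" for k
    proof -
      have "- int k - 1 = - int (Suc k)" by simp
      moreover have "- int k - 1 + 1 = - int k" by simp
      ultimately show ?thesis unfolding gP b_def by (simp only: Pneg)
    qed
    have s1: "(\<lambda>k. ?f (int k)) sums (a 0 - 0)" unfolding f1 by (rule telescope_sums'[OF alim])
    have s2: "(\<lambda>k. ?f (- int k - 1)) sums (1 - b 0)" unfolding f2 by (rule telescope_sums[OF blim])
    have h1: "((\<lambda>k. ?f (int k)) has_sum (a 0)) UNIV"
      using s1 by (intro norm_summable_imp_has_sum) (auto intro: sums_summable simp: gnn abs_of_nonneg)
    have h2: "((\<lambda>k. ?f (- int k - 1)) has_sum (1 - b 0)) UNIV"
      using s2 by (intro norm_summable_imp_has_sum) (auto intro: sums_summable simp: gnn abs_of_nonneg)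
    have i1: "inj (int :: nat \<Rightarrow> int)" by (simp add: inj_on_def)
    have i2: "inj (\<lambda>k::nat. - int k - 1)" by (simp add: inj_on_def)
    have H1: "(?f has_sum (a 0)) (range int)"
      using has_sum_reindex[OF i1, of ?f] h1 by (simp add: comp_def)
    have H2: "(?f has_sum (1 - b 0)) (range (\<lambda>k::nat. - int k - 1))"
      using has_sum_reindex[OF i2, of ?f] h2 by (simp add: comp_def)
    have disj: "range int \<inter> range (\<lambda>k::nat. - int k - 1) = {}" by auto
    have un: "range int \<union> range (\<lambda>k::nat. - int k - 1) = UNIV"
    proof -
      have "j \<in> range int \<union> range (\<lambda>k::nat. - int k - 1)" for j :: int
      proof (cases "0 \<le> j")
        case True then show ?thesis by (metis UnI1 nonneg_int_cases rangeI)
      next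
        case False
        hence "j = - int (nat (- j - 1)) - 1" by simp
        then show ?thesis by blast
      qed
      thus ?thesis by blast
    qed
    have "a 0 = b 0" by (simp add: a_def b_def)
    with has_sum_Un_disjoint[OF H1 H2 disj] show ?thesis unfolding un by simp
  qed
  (* part 3 constants *)
  obtain \<delta> where \<delta>0: "\<delta> > 0" and \<delta>r: "\<And>t. t \<in> {0..} \<Longrightarrow> dist t 0 < \<delta> \<Longrightarrow> dist (r t) (r 0) < 1/2"
  proof -
    have "\<forall>x\<in>{0::real..}. \<forall>e>0. \<exists>d>0. \<forall>x'\<in>{0..}. dist x' x < d \<longrightarrow> dist (r x') (r x) < e"
      using hrc unfolding continuous_on_iff .
    hence h0: "\<forall>e>0. \<exists>d>0. \<forall>x'\<in>{0..}. dist x' 0 < d \<longrightarrow> dist (r x') (r 0) < e" by (rule bspec) simp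
    have "(1/2::real) > 0" by simp
    from h0[rule_format, OF this] obtain d where "d > 0" "\<forall>x'\<in>{0..}. dist x' 0 < d \<longrightarrow> dist (r x') (r 0) < 1/2"
      by blast
    thus ?thesis using that by blast
  qed
  define a where "a = \<delta> / 2"
  have a0: "0 < a" using \<delta>0 by (simp add: a_def)
  have ra: "1/2 \<le> r a"
  proof -
    have "dist (r a) (r 0) < 1/2" using \<delta>r[of a] a0 \<delta>0 by (simp add: a_def dist_real_def)
    hence "\<bar>r a - r 0\<bar> < 1/2" by (simp only: dist_real_def)
    hence "- (r a - r 0) < 1/2" by (simp only: abs_less_iff)
    thus ?thesis using hr0 by linarith
  qed
  have "eventually (\<lambda>t. r t < 1/4) at_top" using order_tendstoD(2)[OF hrlim, of "1/4"] by simp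
  then obtain N0 where N0: "\<And>t. t \<ge> N0 \<Longrightarrow> r t < 1/4" unfolding eventually_at_top_linorder by blast
  define b where "b = max N0 a"
  have rb: "r b < 1/4" using N0 by (simp add: b_def)
  have ab: "a \<le> b" by (simp add: b_def)
  have pos2: "0 < 1 / (2 * (C + 1))" using C0 by simp
  obtain m0 where m0: "\<rho>^m0 < 1 / (2 * (C + 1))" using real_arch_pow_inv[OF pos2 \<rho>1] by blast
  have dbl: "2 * N y \<le> N ((((*v) A) ^^ m0) y)" for y
  proof -
    let ?X = "N ((((*v) A) ^^ m0) y)"
    have X0: "0 \<le> ?X" by (rule nN(2))
    have "N y \<le> C * \<rho>^m0 * ?X" by (rule AB1)
    also have "\<dots> \<le> (C + 1) * \<rho>^m0 * ?X" using X0 \<rho>0 by (intro mult_right_mono) auto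
    also have "\<dots> \<le> (1/2) * ?X"
    proof (rule mult_right_mono[OF _ X0])
      show "(C + 1) * \<rho>^m0 \<le> 1/2" using m0 C0 by (simp add: field_simps)
    qed
    finally show ?thesis by simp
  qed
  obtain k0 where k0: "b / a < 2 ^ k0" using real_arch_pow[of 2 "b / a"] by auto
  have grow: "2^k * N y \<le> N ((((*v) A) ^^ (m0 * k)) y)" for k y
  proof (induction k)
    case 0 then show ?case by simp
  next
    case (Suc k)
    have "2 ^ Suc k * N y = 2 * (2^k * N y)" by simp
    also have "\<dots> \<le> 2 * N ((((*v) A) ^^ (m0 * k)) y)" using Suc by simp
    also have "\<dots> \<le> N ((((*v) A) ^^ m0) ((((*v) A) ^^ (m0 * k)) y))" by (rule dbl)
    also have "\<dots> = N ((((*v) A) ^^ (m0 * Suc k)) y)" by (simp add: funpow_add)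
    finally show ?case .
  qed
  define q where "q = m0 * k0"
  define L where "L = Suc q"
  define Cst where "Cst = 1 / (16 * real L)"
  have Cst0: "0 < Cst" by (simp add: Cst_def L_def)
  have part3: "Cst \<le> (\<Sum>\<^sub>\<infinity>j\<in>(UNIV :: int set). \<bar>g (P \<gamma> j)\<bar>\<^sup>2)
          \<and> (\<Sum>\<^sub>\<infinity>j\<in>(UNIV :: int set). \<bar>g (P \<gamma> j)\<bar>\<^sup>2) \<le> 1" if \<gamma>0: "\<gamma> \<noteq> 0" for \<gamma>
  proof -
    let ?f = "\<lambda>j. g (P \<gamma> j)"
    let ?G = "\<lambda>j. \<bar>g (P \<gamma> j)\<bar>\<^sup>2"
    define s where "s j = N (P \<gamma> j)" for j
    have hs: "(?f has_sum 1) UNIV" by (rule part2[OF \<gamma>0])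
    have fs: "?f summable_on UNIV" using hs by (rule has_sum_imp_summable)
    have Gle: "?G j \<le> ?f j" for j
    proof -
      have "?G j = ?f j * ?f j" by (simp add: power2_eq_square)
      also have "\<dots> \<le> ?f j * 1" using gnn gle1 by (intro mult_left_mono) auto
      finally show ?thesis by simp
    qed
    have Gs: "?G summable_on UNIV"
      by (rule summable_on_comparison_test[OF fs]) (use Gle in auto)
    have up: "(\<Sum>\<^sub>\<infinity>j\<in>(UNIV :: int set). ?G j) \<le> 1"
    proof -
      have "(\<Sum>\<^sub>\<infinity>j\<in>(UNIV :: int set). ?G j) \<le> (\<Sum>\<^sub>\<infinity>j\<in>(UNIV :: int set). ?f j)"
        by (rule infsum_mono[OF Gs fs Gle])
      also have "\<dots> = 1" by (rule infsumI[OF hs])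
      finally show ?thesis .
    qed
    (* crossing *)
    obtain k1 where k1: "N ((((*v) B) ^^ k1) \<gamma>) < a"
    proof -
      have "eventually (\<lambda>k. N ((((*v) B) ^^ k) \<gamma>) < a) sequentially"
        using order_tendstoD(2)[OF limB a0] .
      then show ?thesis using that unfolding eventually_sequentially by blast
    qed
    obtain k2 where k2: "a \<le> N ((((*v) A) ^^ k2) \<gamma>)"
    proof -
      have "eventually (\<lambda>k. a \<le> N ((((*v) A) ^^ k) \<gamma>)) sequentially"
        using limA[OF \<gamma>0] unfolding filterlim_at_top by blast
      then show ?thesis using that unfolding eventually_sequentially by blast
    qed
    have cross: "\<And>j. s j < a \<Longrightarrow> a \<le> s (j + int d) \<Longrightarrow> \<exists>i. s i < a \<and> a \<le> s (i + 1)" for d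
    proof (induction d)
      case 0 then show ?case by simp
    next
      case (Suc d)
      show ?case
      proof (cases "s (j + int d) < a")
        case True
        moreover have "j + int d + 1 = j + int (Suc d)" by simp
        ultimately show ?thesis using Suc.prems by metis
      next
        case False
        then show ?thesis using Suc.IH Suc.prems by simp
      qed
    qed
    have "s (- int k1) < a" using k1 by (simp add: s_def Pneg)
    moreover have "a \<le> s (- int k1 + int (k1 + k2))" using k2 by (simp add: s_def Pnat[symmetric])
    ultimately obtain i0 where i0: "s i0 < a" "a \<le> s (i0 + 1)" using cross by blast
    (* window *)
    have tele: "(\<Sum>t<L. ?f (i0 + int t)) = r (s i0) - r (s (i0 + int L))"
    proof -
      have "(\<Sum>t<L. ?f (i0 + int t)) = (\<Sum>t<L. r (s (i0 + int t)) - r (s (i0 + int (Suc t))))"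
        by (rule sum.cong) (simp_all add: gP s_def add.assoc add.commute[of 1])
      also have "\<dots> = r (s i0) - r (s (i0 + int L))" by (subst sum_lessThan_telescope') simp
      finally show ?thesis .
    qed
    have r1: "1/2 \<le> r (s i0)"
      using hrd[of "s i0" a] i0(1) ra nN(2) by (simp add: s_def)
    have "s (i0 + int L) = N ((((*v) A) ^^ (m0 * k0)) (P \<gamma> (i0 + 1)))"
    proof -
      have "i0 + int L = (i0 + 1) + int q" by (simp add: L_def)
      hence "s (i0 + int L) = N (P \<gamma> ((i0 + 1) + int q))" by (simp only: s_def)
      thus ?thesis by (simp only: Pshift q_def)
    qed
    also have "\<dots> \<ge> 2^k0 * s (i0 + 1)" unfolding s_def by (rule grow)
    finally have sL: "2^k0 * s (i0 + 1) \<le> s (i0 + int L)" .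
    have "b < 2^k0 * a" using k0 a0 by (simp add: divide_less_eq)
    also have "\<dots> \<le> 2^k0 * s (i0 + 1)" using i0(2) by simp
    finally have "b \<le> s (i0 + int L)" using sL by simp
    hence r2: "r (s (i0 + int L)) < 1/4" using hrd[of b] rb a0 ab by (meson dual_order.trans less_le_not_le le_less_trans)
    have wsum: "1/4 \<le> (\<Sum>t<L. ?f (i0 + int t))" using tele r1 r2 by simp
    have "(1/4)\<^sup>2 \<le> (\<Sum>t<L. ?f (i0 + int t))\<^sup>2" using wsum by (intro power_mono) auto
    also have "\<dots> \<le> (\<Sum>t<L. (?f (i0 + int t))\<^sup>2) * real (card {..<L})"
      by (rule sum_squared_le_sum_of_squares)
    finally have cs: "1/16 \<le> (\<Sum>t<L. (?f (i0 + int t))\<^sup>2) * real L" by (simp add: power2_eq_square)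
    have "Cst \<le> (\<Sum>t<L. (?f (i0 + int t))\<^sup>2)"
      using cs by (simp add: Cst_def L_def divide_le_eq field_simps)
    also have "\<dots> = sum ?G ((\<lambda>t. i0 + int t) ` {..<L})"
      by (subst sum.reindex) (auto simp: inj_on_def)
    also have "\<dots> \<le> (\<Sum>\<^sub>\<infinity>j\<in>(UNIV :: int set). ?G j)"
      by (rule finite_sum_le_infsum[OF Gs]) auto
    finally show ?thesis using up by simp
  qed
  show ?thesis
  proof (intro conjI allI impI)
    show "\<And>\<gamma>. 0 \<le> g \<gamma>" by (rule gnn)
    show "\<And>\<gamma>. \<gamma> \<noteq> 0 \<Longrightarrow> ((\<lambda>j. g (matpow_int_v A j \<gamma>)) has_sum 1) UNIV"
      using part2 unfolding P_def by blast
    show "\<exists>C>0. \<forall>\<gamma>. \<gamma> \<noteq> 0 \<longrightarrow>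
          C \<le> (\<Sum>\<^sub>\<infinity>j\<in>(UNIV :: int set). \<bar>g (matpow_int_v A j \<gamma>)\<bar>\<^sup>2)
          \<and> (\<Sum>\<^sub>\<infinity>j\<in>(UNIV :: int set). \<bar>g (matpow_int_v A j \<gamma>)\<bar>\<^sup>2) \<le> 1"
      using part3 Cst0 unfolding P_def by blast
  qed
qed

end
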